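(* There exist a connected continuous-time interconnection $\Gamma=[\gamma_{ij}]\in\mathbb{R}^{p\times p}$ and a map $Q:\mathbb{R}\to\overline{\mathcal Q}_n$ satisfying $$\liminf_{T\to\infty}\frac1T\,\sigma_{\min}\Big(\int_0^TQ_t\,dt\Big)>0$$ such that the solutions $x_i(\cdot)$ of $\dot x_i=Q_t\sum_{j\ne i}\gamma_{ij}(x_j-x_i)$ do not synchronize (for some initial condition).
   Context: $\sigma_{\min}$ smallest singular value; $\overline{\mathcal Q}_n$ the set of symmetric positive semidefinite $n\times n$ matrices with induced 2-norm at most $1$. Continuous-time interconnection: $\gamma_{ij}\ge0$ ($i\ne j$), $\gamma_{ii}=-\sum_{j\ne i}\gamma_{ij}$; graph edge $(n_i,n_j)$ iff $\gamma_{ij}>0$; connected if some node is reachable by a directed path from every other node. Functions $x_i$ synchronize if there is $\bar x$ with $|x_i(t)-\bar x(t)|\to0$ as $t\to\infty$ for all $i$. *)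

theory Defs
  imports "HOL-Analysis.Analysis"
begin

text \<open>Vectors in R^n are represented as functions nat => real (only indices < n matter),
  n x n matrices as functions nat => nat => real (only indices < n matter).\<close>

definition vnorm :: "nat \<Rightarrow> (nat \<Rightarrow> real) \<Rightarrow> real" where
  "vnorm n v = sqrt (\<Sum>k<n. (v k)^2)"

definition mvmult :: "nat \<Rightarrow> (nat \<Rightarrow> nat \<Rightarrow> real) \<Rightarrow> (nat \<Rightarrow> real) \<Rightarrow> (nat \<Rightarrow> real)" where
  "mvmult n M v = (\<lambda>k. \<Sum>l<n. M k l * v l)"

definition sigma_min :: "nat \<Rightarrow> (nat \<Rightarrow> nat \<Rightarrow> real) \<Rightarrow> real" where
  "sigma_min n M = Inf {vnorm n (mvmult n M v) | v. vnorm n v = 1}"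

definition Qbar :: "nat \<Rightarrow> (nat \<Rightarrow> nat \<Rightarrow> real) set" where
  "Qbar n = {M. (\<forall>k<n. \<forall>l<n. M k l = M l k)
               \<and> (\<forall>v. 0 \<le> (\<Sum>k<n. v k * mvmult n M v k))
               \<and> (\<forall>v. vnorm n (mvmult n M v) \<le> vnorm n v)}"

definition interconnection :: "nat \<Rightarrow> (nat \<Rightarrow> nat \<Rightarrow> real) \<Rightarrow> bool" where
  "interconnection p \<Gamma> \<longleftrightarrow>
     (\<forall>i<p. \<forall>j<p. i \<noteq> j \<longrightarrow> 0 \<le> \<Gamma> i j) \<and>
     (\<forall>i<p. \<Gamma> i i = - (\<Sum>j\<in>{..<p} - {i}. \<Gamma> i j))"

definition edge :: "nat \<Rightarrow> (nat \<Rightarrow> nat \<Rightarrow> real) \<Rightarrow> nat \<Rightarrow> nat \<Rightarrow> bool" where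
  "edge p \<Gamma> i j \<longleftrightarrow> i < p \<and> j < p \<and> 0 < \<Gamma> i j"

definition connected_ic :: "nat \<Rightarrow> (nat \<Rightarrow> nat \<Rightarrow> real) \<Rightarrow> bool" where
  "connected_ic p \<Gamma> \<longleftrightarrow> (\<exists>k<p. \<forall>j<p. j \<noteq> k \<longrightarrow> (edge p \<Gamma>)\<^sup>+\<^sup>+ j k)"

definition int_Q :: "(real \<Rightarrow> nat \<Rightarrow> nat \<Rightarrow> real) \<Rightarrow> real \<Rightarrow> nat \<Rightarrow> nat \<Rightarrow> real" where
  "int_Q Q T = (\<lambda>k l. integral {0..T} (\<lambda>t. Q t k l))"

text \<open>x i k t is component k of agent i at time t. Solution (Caratheodory / integral form) on
  [0, infinity) of  x_i' = Q_t sum_{j ~= i} gamma_ij (x_j - x_i).\<close>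
definition is_solution ::
  "nat \<Rightarrow> nat \<Rightarrow> (nat \<Rightarrow> nat \<Rightarrow> real) \<Rightarrow> (real \<Rightarrow> nat \<Rightarrow> nat \<Rightarrow> real)
     \<Rightarrow> (nat \<Rightarrow> nat \<Rightarrow> real \<Rightarrow> real) \<Rightarrow> bool" where
  "is_solution p n \<Gamma> Q x \<longleftrightarrow>
     (\<forall>i<p. \<forall>k<n. \<forall>t\<ge>0.
        ((\<lambda>s. \<Sum>l<n. Q s k l * (\<Sum>j\<in>{..<p} - {i}. \<Gamma> i j * (x j l s - x i l s)))
           has_integral (x i k t - x i k 0)) {0..t})"

definition synchronize :: "nat \<Rightarrow> nat \<Rightarrow> (nat \<Rightarrow> nat \<Rightarrow> real \<Rightarrow> real) \<Rightarrow> bool" where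
  "synchronize p n x \<longleftrightarrow>
     (\<exists>xbar :: real \<Rightarrow> nat \<Rightarrow> real.
        \<forall>i<p. ((\<lambda>t. vnorm n (\<lambda>k. x i k t - xbar t k)) \<longlongrightarrow> 0) at_top)"

end

theory Submission
  imports Defs
begin

definition bb :: "real \<Rightarrow> real" where "bb t = 1 / (4 * (1 + t))"
definition ph :: "real \<Rightarrow> real" where "ph t = ln (1 + t) / 4"
definition UU :: "real \<Rightarrow> nat \<Rightarrow> real" where
  "UU t k = (if k = 0 then cos (ph t) else sin (ph t))"
definition WW :: "real \<Rightarrow> nat \<Rightarrow> real" where
  "WW t k = (if k = 0 then - sin (ph t) else cos (ph t))"
definition Qm :: "real \<Rightarrow> nat \<Rightarrow> nat \<Rightarrow> real" where
  "Qm t k l = 4 * (bb t)^2 * UU t k * UU t l - bb t * (UU t k * WW t l + WW t k * UU t l)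
     + 1/2 * WW t k * WW t l"
definition QQ :: "real \<Rightarrow> nat \<Rightarrow> nat \<Rightarrow> real" where "QQ t = Qm (max t 0)"
definition rr :: "real \<Rightarrow> real" where "rr t = exp (- t / (4 * (1 + t)))"
definition xx :: "nat \<Rightarrow> nat \<Rightarrow> real \<Rightarrow> real" where
  "xx i k t = (if i = 0 then rr t * UU t k else 0)"
definition Gam :: "nat \<Rightarrow> nat \<Rightarrow> real" where
  "Gam i j = (if i = 0 \<and> j = 1 then 1 else if i = 0 \<and> j = 0 then -1 else 0)"

lemma sum2: "(\<Sum>k<(2::nat). f k) = f 0 + f (1::nat)"
  by (simp add: numeral_2_eq_2)

lemma UU_norm: "UU t 0 ^ 2 + UU t 1 ^ 2 = 1" and WW_norm: "WW t 0 ^ 2 + WW t 1 ^ 2 = 1"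
  and UW: "UU t 0 * WW t 0 + UU t 1 * WW t 1 = 0"
  by (auto simp: UU_def WW_def algebra_simps)

lemma deriv_x0:
  assumes "t > -1"
  shows "((\<lambda>s. xx 0 k s) has_real_derivative
     (- 4 * (bb t)^2 * rr t * UU t k + bb t * rr t * WW t k)) (at t)"
proof -
  have h1: "1 + t > 0" using assms by simp
  show ?thesis
  proof (cases "k = 0")
    case True
    have "((\<lambda>s. exp (- s / (4 * (1 + s))) * cos (ln (1 + s) / 4))
     has_real_derivative
     (- 4 * (bb t)^2 * rr t * UU t k + bb t * rr t * WW t k)) (at t)"
      using h1 True
      apply -
      apply (rule derivative_eq_intros refl | simp)+
      apply (simp add: bb_def rr_def UU_def WW_def ph_def power2_eq_square field_simps)
      done
    then show ?thesis using True by (simp add: xx_def rr_def UU_def ph_def)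
  next
    case False
    have "((\<lambda>s. exp (- s / (4 * (1 + s))) * sin (ln (1 + s) / 4))
     has_real_derivative
     (- 4 * (bb t)^2 * rr t * UU t k + bb t * rr t * WW t k)) (at t)"
      using h1 False
      apply -
      apply (rule derivative_eq_intros refl | simp)+
      apply (simp add: bb_def rr_def UU_def WW_def ph_def power2_eq_square field_simps)
      done
    then show ?thesis using False by (simp add: xx_def rr_def UU_def ph_def)
  qed
qed

lemma integrand0:
  assumes "s \<ge> 0"
  shows "(\<Sum>l<2. QQ s k l * (\<Sum>j\<in>{..<2} - {0}. Gam 0 j * (xx j l s - xx 0 l s)))
     = - 4 * (bb s)^2 * rr s * UU s k + bb s * rr s * WW s k"
proof -
  have d: "{..<(2::nat)} - {0} = {1}" by auto
  have e: "(\<Sum>l<2. QQ s k l * (\<Sum>j\<in>{..<2} - {0}. Gam 0 j * (xx j l s - xx 0 l s)))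
     = - rr s * (4*(bb s)^2*UU s k*(UU s 0^2+UU s 1^2)
        - bb s*(UU s k*(UU s 0 * WW s 0 + UU s 1 * WW s 1) + WW s k*(UU s 0^2+UU s 1^2))
        + 1/2*WW s k*(UU s 0 * WW s 0 + UU s 1 * WW s 1))"
    using assms unfolding d sum2
    by (simp add: QQ_def Qm_def Gam_def xx_def max_def algebra_simps power2_eq_square)
  show ?thesis unfolding e UU_norm UW by (simp add: algebra_simps)
qed

lemma sol: "is_solution 2 2 Gam QQ xx"
  unfolding is_solution_def
proof (intro allI impI)
  fix i k :: nat and t :: real
  assume i: "i < 2" and k: "k < 2" and t: "0 \<le> t"
  show "((\<lambda>s. \<Sum>l<2. QQ s k l * (\<Sum>j\<in>{..<2} - {i}. Gam i j * (xx j l s - xx i l s)))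
           has_integral (xx i k t - xx i k 0)) {0..t}"
  proof (cases "i = 0")
    case True
    have "((\<lambda>s. - 4 * (bb s)^2 * rr s * UU s k + bb s * rr s * WW s k)
           has_integral (xx 0 k t - xx 0 k 0)) {0..t}"
    proof (rule fundamental_theorem_of_calculus[OF t])
      fix x assume "x \<in> {0..t}"
      then have "x > -1" by auto
      from deriv_x0[OF this, of k] show "(xx 0 k has_vector_derivative
          - 4 * (bb x)^2 * rr x * UU x k + bb x * rr x * WW x k) (at x within {0..t})"
        by (simp add: has_real_derivative_iff_has_vector_derivative[symmetric] has_field_derivative_at_within)
    qed
    then show ?thesis unfolding True
      by (rule has_integral_eq[rotated]) (use integrand0 in auto)
  next
    case False
    then have "i = 1" using i by auto
    moreover have "{..<(2::nat)} - {1} = {0}" by auto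
    ultimately show ?thesis by (simp add: Gam_def xx_def)
  qed
qed

lemma sq_le: "(x - y::real)^2 \<le> 2*x^2 + 2*y^2"
proof -
  have "0 \<le> (x+y)^2" by simp
  then show ?thesis by (simp add: power2_eq_square algebra_simps)
qed

lemma Qbar_QQ: "QQ t \<in> Qbar 2"
proof -
  define s where "s = max t 0"
  have s0: "s \<ge> 0" by (simp add: s_def)
  have b0: "bb s \<ge> 0" and b1: "bb s \<le> 1/4" using s0 by (auto simp: bb_def field_simps)
  define b where "b = bb s"
  have Qs: "QQ t = Qm s" by (simp add: QQ_def s_def)
  have mv: "\<And>v k. mvmult 2 (Qm s) v k = UU s k * (4*b^2*(UU s 0 * v 0 + UU s 1 * v 1) - b*(WW s 0 * v 0 + WW s 1 * v 1))
       + WW s k * ((WW s 0 * v 0 + WW s 1 * v 1)/2 - b*(UU s 0 * v 0 + UU s 1 * v 1))"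
    by (simp add: mvmult_def sum2 Qm_def b_def algebra_simps)
  have rot: "\<And>f g. (f * UU s 0 + g * WW s 0)^2 + (f * UU s 1 + g * WW s 1)^2 = f^2 + g^2"
  proof -
    fix f g
    have "(f * UU s 0 + g * WW s 0)^2 + (f * UU s 1 + g * WW s 1)^2
        = f^2 * (UU s 0^2 + UU s 1^2) + g^2 * (WW s 0^2 + WW s 1^2) + 2*f*g*(UU s 0 * WW s 0 + UU s 1 * WW s 1)"
      by (simp only: algebra_simps power2_eq_square)
    then show "(f * UU s 0 + g * WW s 0)^2 + (f * UU s 1 + g * WW s 1)^2 = f^2 + g^2"
      unfolding UU_norm WW_norm UW by simp
  qed
  have vrot: "\<And>v::nat\<Rightarrow>real. v 0 ^2 + v 1 ^2 = (UU s 0 * v 0 + UU s 1 * v 1)^2 + (WW s 0 * v 0 + WW s 1 * v 1)^2"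
  proof -
    fix v :: "nat \<Rightarrow> real"
    have "(UU s 0 * v 0 + UU s 1 * v 1)^2 + (WW s 0 * v 0 + WW s 1 * v 1)^2
       = v 0^2 * (UU s 0^2 + WW s 0^2) + v 1^2 * (UU s 1^2 + WW s 1^2) + 2 * v 0 * v 1 * (UU s 0 * UU s 1 + WW s 0 * WW s 1)"
      by (simp add: algebra_simps power2_eq_square)
    moreover have "UU s 0^2 + WW s 0^2 = 1" "UU s 1^2 + WW s 1^2 = 1" "UU s 0 * UU s 1 + WW s 0 * WW s 1 = 0"
      by (auto simp: UU_def WW_def)
    ultimately show "v 0 ^2 + v 1 ^2 = (UU s 0 * v 0 + UU s 1 * v 1)^2 + (WW s 0 * v 0 + WW s 1 * v 1)^2" by simp
  qed
  have sym: "\<forall>k<2. \<forall>l<2. Qm s k l = Qm s l k" by (simp add: Qm_def algebra_simps)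
  have psd: "\<forall>v. 0 \<le> (\<Sum>k<2. v k * mvmult 2 (Qm s) v k)"
  proof
    fix v :: "nat \<Rightarrow> real"
    define \<alpha> where "\<alpha> = UU s 0 * v 0 + UU s 1 * v 1"
    define \<beta> where "\<beta> = WW s 0 * v 0 + WW s 1 * v 1"
    have "(\<Sum>k<2. v k * mvmult 2 (Qm s) v k) = \<alpha> * (4*b^2*\<alpha> - b*\<beta>) + \<beta> * (\<beta>/2 - b*\<alpha>)"
      unfolding sum2 mv \<alpha>_def \<beta>_def by (simp add: algebra_simps add_divide_distrib[symmetric])
    also have "\<dots> = (2*b*\<alpha> - \<beta>/2)^2 + \<beta>^2/4" by (simp add: field_simps power2_eq_square)
    also have "\<dots> \<ge> 0" by simp
    finally show "0 \<le> (\<Sum>k<2. v k * mvmult 2 (Qm s) v k)" .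
  qed
  have nrm: "\<forall>v. vnorm 2 (mvmult 2 (Qm s) v) \<le> vnorm 2 v"
  proof
    fix v :: "nat \<Rightarrow> real"
    define \<alpha> where "\<alpha> = UU s 0 * v 0 + UU s 1 * v 1"
    define \<beta> where "\<beta> = WW s 0 * v 0 + WW s 1 * v 1"
    have "(\<Sum>k<2. (mvmult 2 (Qm s) v k)^2) = (4*b^2*\<alpha> - b*\<beta>)^2 + (\<beta>/2 - b*\<alpha>)^2"
      unfolding sum2 mv \<alpha>_def[symmetric] \<beta>_def[symmetric]
      using rot[of "4*b^2*\<alpha> - b*\<beta>" "\<beta>/2 - b*\<alpha>"] by (simp add: algebra_simps)
    also have "\<dots> \<le> \<alpha>^2 + \<beta>^2"
    proof -
      have bb0: "0 \<le> b" "b \<le> 1/4" using b0 b1 by (auto simp: b_def)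
      have "b*b \<le> (1/4)*(1/4)" by (rule mult_mono) (use bb0 in auto)
      hence b2: "b^2 \<le> 1/16" by (simp add: power2_eq_square)
      have "(b^2)^2 \<le> (1/16)^2" by (rule power_mono[OF b2]) simp
      hence b4: "b^4 \<le> 1/256" by (simp add: power4_eq_xxxx power2_eq_square mult.assoc)
      have i1: "(4*b^2*\<alpha> - b*\<beta>)^2 \<le> 32*b^4*\<alpha>^2 + 2*b^2*\<beta>^2"
        using sq_le[of "4*b^2*\<alpha>" "b*\<beta>"] by (simp add: power_mult_distrib power4_eq_xxxx power2_eq_square mult_ac)
      have i2: "(\<beta>/2 - b*\<alpha>)^2 \<le> \<beta>^2/2 + 2*b^2*\<alpha>^2"
        using sq_le[of "\<beta>/2" "b*\<alpha>"] by (simp add: power_mult_distrib power2_eq_square mult_ac)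
      have "32*b^4*\<alpha>^2 \<le> \<alpha>^2/8" using mult_right_mono[OF b4 zero_le_power2[of \<alpha>]] by simp
      moreover have "2*b^2*\<beta>^2 \<le> \<beta>^2/8" "2*b^2*\<alpha>^2 \<le> \<alpha>^2/8"
        using mult_right_mono[OF b2 zero_le_power2[of \<alpha>]] mult_right_mono[OF b2 zero_le_power2[of \<beta>]] by simp_all
      ultimately show ?thesis using i1 i2 zero_le_power2[of \<alpha>] zero_le_power2[of \<beta>] by linarith
    qed
    also have "\<dots> = (\<Sum>k<2. (v k)^2)" unfolding sum2 \<alpha>_def \<beta>_def vrot[symmetric] ..
    finally show "vnorm 2 (mvmult 2 (Qm s) v) \<le> vnorm 2 v"
      unfolding vnorm_def by (simp add: real_sqrt_le_iff)
  qed
  show ?thesis unfolding Qs Qbar_def using sym psd nrm by blast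
qed

definition Gf :: "real \<Rightarrow> real \<Rightarrow> real \<Rightarrow> real" where
  "Gf a c t = t/2 + (1/2)*(a*(4/5)*(1+t)*(cos (2*ph t) + sin (2*ph t)/2)
       - c*(4/5)*(1+t)*(sin (2*ph t) - cos (2*ph t)/2))"
definition Df :: "real \<Rightarrow> real \<Rightarrow> real \<Rightarrow> real" where
  "Df a c t = 1/2 + (1/2)*(a*cos (2*ph t) - c * sin (2*ph t))"

lemma aux_G: "0 < 1 + (t::real) \<Longrightarrow>
     8 * (a * (C + S / 2)) / 5 +
     8 * ((16 * C / (64 + 64 * t) - S * 8 / (16 + t * 16)) * (a * (1 + t))) / 5 -
     (8 * (c * (S - C / 2)) / 5 +
      8 * ((C * 8 / (16 + t * 16) + 16 * S / (64 + 64 * t)) * (c * (1 + t))) / 5) =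
     a * C * 2 - c * S * 2"
proof -
  assume h: "0 < 1 + t"
  define u where "u = 1 + t"
  have u: "u \<noteq> 0" using h by (simp add: u_def)
  have e1: "64 + 64 * t = 64 * u" "16 + t * 16 = 16 * u" by (simp_all add: u_def)
  show ?thesis unfolding e1 u_def[symmetric] using u by (simp add: field_simps)
qed

lemma G_deriv:
  assumes "t > -1"
  shows "(Gf a c has_real_derivative Df a c t) (at t)"
proof -
  have h1: "1 + t > 0" using assms by simp
  show ?thesis
    unfolding Gf_def ph_def using h1
    apply -
    apply (rule derivative_eq_intros refl | simp)+
    apply (simp add: Df_def ph_def)
    apply (rule aux_G, simp)
    done
qed

lemma beta_Df:
  assumes "pa^2 + qa^2 = (1::real)"
  shows "(WW t 0 * pa + WW t 1 * qa)^2 = Df (qa^2 - pa^2) (2*pa*qa) t"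
proof -
  define c where "c = cos (ph t)"
  define s where "s = sin (ph t)"
  have cs: "s^2 + c^2 = 1" by (simp add: c_def s_def)
  have "(WW t 0 * pa + WW t 1 * qa)^2 - Df (qa^2 - pa^2) (2*pa*qa) t
      = (1/2)*((pa^2+qa^2)*(s^2+c^2)) - 1/2"
    unfolding Df_def WW_def cos_double sin_double c_def[symmetric] s_def[symmetric]
    by (simp add: algebra_simps power2_eq_square)
  then show ?thesis using assms cs by simp
qed

lemma cont_Qm: "continuous_on {0..T} (\<lambda>t. Qm t k l)"
  unfolding Qm_def bb_def UU_def WW_def ph_def
  by (cases "k=0"; cases "l=0") (auto intro!: continuous_intros simp: add_pos_nonneg)

lemma integrable_QQ: "(\<lambda>t. QQ t k l) integrable_on {0..T}"
proof -
  have "(\<lambda>t. Qm t k l) integrable_on {0..T}"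
    by (rule integrable_continuous_interval[OF cont_Qm])
  then show ?thesis by (rule integrable_eq) (auto simp: QQ_def)
qed

lemma G_bound:
  assumes pq: "pa^2 + qa^2 = (1::real)" and T: "T \<ge> 0"
  shows "Gf (qa^2 - pa^2) (2*pa*qa) T - Gf (qa^2 - pa^2) (2*pa*qa) 0 \<ge> T/20 - 9/10"
proof -
  define a where "a = qa^2 - pa^2"
  define c where "c = 2*pa*qa"
  define X where "X = 2 * ph T"
  define Cx where "Cx = cos X"
  define Sx where "Sx = sin X"
  define P where "P = 1 + T"
  define Cc where "Cc = (4/5)*(P*(Cx + Sx/2) - 1)"
  define Ss where "Ss = (4/5)*(P*(Sx - Cx/2) + 1/2)"
  define B where "B = a*Cc - c*Ss"
  have P0: "P \<ge> 1" using T by (simp add: P_def)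
  have diff: "Gf a c T - Gf a c 0 = T/2 + B/2"
    unfolding Gf_def B_def Cc_def Ss_def P_def Cx_def Sx_def X_def
    by (simp add: ph_def field_simps)
  have a2c2: "a^2 + c^2 = 1"
  proof -
    have "a^2 + c^2 = (pa^2 + qa^2)^2" unfolding a_def c_def by (simp add: algebra_simps power2_eq_square)
    then show ?thesis using pq by simp
  qed
  have sc: "Sx^2 + Cx^2 = 1" by (simp add: Sx_def Cx_def)
  have CS0: "Cc^2 + Ss^2 = (4/5)*(P^2*(Cx^2+Sx^2) - 2*P*Cx + 1)"
    unfolding Cc_def Ss_def by (simp add: field_simps power2_eq_square)
  have "P * Cx \<ge> P * (-1)" using P0 by (intro mult_left_mono) (auto simp: Cx_def)
  hence PC: "P * Cx \<ge> - P" by simp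
  have CS1: "Cc^2 + Ss^2 = (4/5)*(P^2 - 2*(P*Cx) + 1)" using CS0 sc by (simp add: add.commute)
  have P1: "(P+1)^2 = P^2 + 2*P + 1" by (simp add: power2_eq_square algebra_simps)
  have CS: "Cc^2 + Ss^2 \<le> (4/5)*(P+1)^2" unfolding CS1 P1 using PC by (simp add: mult.commute)
  have cs2: "B^2 \<le> (a^2 + c^2)*(Cc^2 + Ss^2)"
  proof -
    have "(a^2 + c^2)*(Cc^2 + Ss^2) - B^2 = (a*Ss + c*Cc)^2"
      unfolding B_def by (simp add: algebra_simps power2_eq_square)
    then show ?thesis by (smt (verit) zero_le_power2)
  qed
  have B2: "B^2 \<le> (4/5)*(P+1)^2" using cs2 CS a2c2 by simp
  have Bge: "B \<ge> -(9/10)*(P+1)"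
  proof (rule ccontr)
    assume "\<not> ?thesis"
    hence "-B > (9/10)*(P+1)" by linarith
    moreover have "(9/10)*(P+1) \<ge> 0" using P0 by simp
    ultimately have "((9/10)*(P+1))^2 < (-B)^2" by (intro power_strict_mono) auto
    moreover have "((9/10)*(P+1))^2 = (81/100)*(P+1)^2" by (simp only: power_mult_distrib) (simp add: power2_eq_square)
    moreover have "(-B)^2 = B^2" by simp
    ultimately have "(81/100)*(P+1)^2 < B^2" by linarith
    moreover have "(P+1)^2 > 0" using P0 by simp
    ultimately show False using B2 by linarith
  qed
  have "T/20 - 9/10 \<le> T/2 + B/2" using Bge unfolding P_def by (simp add: field_simps)
  hence "Gf a c T - Gf a c 0 \<ge> T/20 - 9/10" using diff by simp
  then show ?thesis unfolding a_def c_def .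
qed

lemma lin_aux: "g/4 \<le> s \<Longrightarrow> T/20 - 9/10 \<le> g \<Longrightarrow> T/80 - 9/40 \<le> (s::real)" by linarith

lemma qf_id:
  "(\<Sum>k<2. v k * mvmult 2 (Qm s) v k)
     = (2*bb s*(UU s 0 * v 0 + UU s 1 * v 1) - (WW s 0 * v 0 + WW s 1 * v 1)/2)^2
       + (WW s 0 * v 0 + WW s 1 * v 1)^2/4"
proof -
  define b where "b = bb s"
  define \<alpha> where "\<alpha> = UU s 0 * v 0 + UU s 1 * v 1"
  define \<beta> where "\<beta> = WW s 0 * v 0 + WW s 1 * v 1"
  have mv: "\<And>k. mvmult 2 (Qm s) v k = UU s k * (4*b^2*\<alpha> - b*\<beta>) + WW s k * (\<beta>/2 - b*\<alpha>)"
    by (simp add: mvmult_def sum2 Qm_def b_def \<alpha>_def \<beta>_def algebra_simps)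
  have "(\<Sum>k<2. v k * mvmult 2 (Qm s) v k) = \<alpha> * (4*b^2*\<alpha> - b*\<beta>) + \<beta> * (\<beta>/2 - b*\<alpha>)"
    unfolding sum2 mv \<alpha>_def \<beta>_def by (simp add: algebra_simps add_divide_distrib[symmetric])
  also have "\<dots> = (2*b*\<alpha> - \<beta>/2)^2 + \<beta>^2/4" by (simp add: field_simps power2_eq_square)
  finally show ?thesis unfolding b_def \<alpha>_def \<beta>_def .
qed

lemma quad_bound:
  assumes v: "v 0 ^2 + v 1 ^2 = (1::real)" and T: "T \<ge> 0"
  shows "(\<Sum>k<2. v k * mvmult 2 (int_Q QQ T) v k) \<ge> T/80 - 9/40"
proof -
  define qf where "qf t = v 0 * v 0 * QQ t 0 0 + v 0 * v 1 * QQ t 0 1 + v 1 * v 0 * QQ t 1 0 + v 1 * v 1 * QQ t 1 1" for t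
  have ent: "\<And>k l. ((\<lambda>t. QQ t k l) has_integral int_Q QQ T k l) {0..T}"
    unfolding int_Q_def by (rule integrable_integral[OF integrable_QQ])
  have hq: "(qf has_integral (v 0 * v 0 * int_Q QQ T 0 0 + v 0 * v 1 * int_Q QQ T 0 1
       + v 1 * v 0 * int_Q QQ T 1 0 + v 1 * v 1 * int_Q QQ T 1 1)) {0..T}"
    unfolding qf_def
    by (intro has_integral_add has_integral_mult_right ent)
  have lhs: "(\<Sum>k<2. v k * mvmult 2 (int_Q QQ T) v k) = v 0 * v 0 * int_Q QQ T 0 0 + v 0 * v 1 * int_Q QQ T 0 1
       + v 1 * v 0 * int_Q QQ T 1 0 + v 1 * v 1 * int_Q QQ T 1 1"
    by (simp add: sum2 mvmult_def algebra_simps)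
  define a where "a = v 1 ^2 - v 0 ^2"
  define c where "c = 2 * v 0 * v 1"
  have hD: "(Df a c has_integral (Gf a c T - Gf a c 0)) {0..T}"
  proof (rule fundamental_theorem_of_calculus[OF T])
    fix x assume "x \<in> {0..T}"
    then have "x > -1" by auto
    from G_deriv[OF this] show "(Gf a c has_vector_derivative Df a c x) (at x within {0..T})"
      by (simp add: has_real_derivative_iff_has_vector_derivative[symmetric] has_field_derivative_at_within)
  qed
  have hD4: "((\<lambda>t. Df a c t / 4) has_integral ((Gf a c T - Gf a c 0) / 4)) {0..T}"
    using has_integral_mult_left[OF hD, of "1/4"] by simp
  have pw: "Df a c t / 4 \<le> qf t" if "t \<in> {0..T}" for t
  proof -
    have t0: "max t 0 = t" using that by auto
    have "qf t = (\<Sum>k<2. v k * mvmult 2 (Qm t) v k)"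
      unfolding qf_def QQ_def t0 by (simp add: sum2 mvmult_def algebra_simps)
    also have "\<dots> \<ge> (WW t 0 * v 0 + WW t 1 * v 1)^2/4" unfolding qf_id by simp
    also have "(WW t 0 * v 0 + WW t 1 * v 1)^2 = Df a c t"
      unfolding a_def c_def by (rule beta_Df[OF v])
    finally show ?thesis .
  qed
  have "(Gf a c T - Gf a c 0) / 4 \<le> v 0 * v 0 * int_Q QQ T 0 0 + v 0 * v 1 * int_Q QQ T 0 1
       + v 1 * v 0 * int_Q QQ T 1 0 + v 1 * v 1 * int_Q QQ T 1 1"
    by (rule has_integral_le[OF hD4 hq pw])
  moreover have "Gf a c T - Gf a c 0 \<ge> T/20 - 9/10" unfolding a_def c_def by (rule G_bound[OF v T])
  ultimately show ?thesis unfolding lhs by (rule lin_aux)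
qed

lemma vnorm2: "vnorm 2 w = cmod (Complex (w 0) (w 1))"
  by (simp add: vnorm_def sum2 complex_norm)

lemma sigma_bound:
  assumes T: "T \<ge> 36"
  shows "sigma_min 2 (int_Q QQ T) / T \<ge> 1/160"
proof -
  let ?M = "int_Q QQ T"
  have "T/160 \<le> sigma_min 2 ?M"
    unfolding sigma_min_def
  proof (rule cInf_greatest)
    let ?e = "\<lambda>k::nat. if k = 0 then 1 else (0::real)"
    have "vnorm 2 ?e = 1" by (simp add: vnorm_def sum2)
    then show "{vnorm 2 (mvmult 2 ?M v) |v. vnorm 2 v = 1} \<noteq> {}" by blast
  next
    fix x assume "x \<in> {vnorm 2 (mvmult 2 ?M v) |v. vnorm 2 v = 1}"
    then obtain v where x: "x = vnorm 2 (mvmult 2 ?M v)" and v1: "vnorm 2 v = 1" by blast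
    have vv: "v 0 ^2 + v 1 ^2 = 1" using v1 by (simp add: vnorm_def sum2)
    define w where "w = mvmult 2 ?M v"
    have qb: "v 0 * w 0 + v 1 * w 1 \<ge> T/80 - 9/40"
      using quad_bound[OF vv] T unfolding w_def by (simp add: sum2)
    have "(v 0 ^2 + v 1 ^2) * (w 0 ^2 + w 1 ^2) - (v 0 * w 0 + v 1 * w 1)^2 = (v 0 * w 1 - v 1 * w 0)^2"
      by (simp add: algebra_simps power2_eq_square)
    hence "(v 0 * w 0 + v 1 * w 1)^2 \<le> w 0 ^2 + w 1 ^2" using vv
      by (metis diff_ge_0_iff_ge mult_1 zero_le_power2)
    hence "v 0 * w 0 + v 1 * w 1 \<le> sqrt (w 0 ^2 + w 1 ^2)" by (rule real_le_rsqrt)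
    hence "v 0 * w 0 + v 1 * w 1 \<le> x" unfolding x w_def[symmetric] by (simp add: vnorm_def sum2)
    moreover have "T/160 \<le> T/80 - 9/40" using T by simp
    ultimately show "T/160 \<le> x" using qb by linarith
  qed
  then show ?thesis using T by (simp add: field_simps)
qed

lemma rr_lower: "t \<ge> 0 \<Longrightarrow> rr t \<ge> exp (-1/4)"
proof -
  assume t: "t \<ge> 0"
  have "t / (4*(1+t)) \<le> 1/4" using t by (simp add: field_simps)
  then show ?thesis unfolding rr_def by simp
qed

lemma not_sync: "\<not> synchronize 2 2 xx"
proof
  assume "synchronize 2 2 xx"
  then obtain xbar :: "real \<Rightarrow> nat \<Rightarrow> real" where
    H: "\<forall>i<2. ((\<lambda>t. vnorm 2 (\<lambda>k. xx i k t - xbar t k)) \<longlongrightarrow> 0) at_top"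
    unfolding synchronize_def by blast
  define f where "f t = vnorm 2 (\<lambda>k. xx 0 k t - xbar t k) + vnorm 2 (\<lambda>k. xx 1 k t - xbar t k)" for t
  have "(f \<longlongrightarrow> 0 + 0) at_top" unfolding f_def using H by (intro tendsto_add) auto
  hence "eventually (\<lambda>t. f t < exp (-1/4)) at_top"
    by (intro order_tendstoD(2)) auto
  moreover have "eventually (\<lambda>t. t \<ge> (0::real)) at_top" by (rule eventually_ge_at_top)
  ultimately have "eventually (\<lambda>t::real. False) at_top"
  proof (rule eventually_mono[OF eventually_conj])
    fix t :: real assume A: "f t < exp (-1/4) \<and> 0 \<le> t"
    hence t: "t \<ge> 0" by simp
    have r: "rr t \<ge> exp (-1/4)" by (rule rr_lower[OF t])
    have rpos: "rr t > 0" by (simp add: rr_def)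
    let ?z0 = "Complex (xx 0 0 t - xbar t 0) (xx 0 1 t - xbar t 1)"
    let ?z1 = "Complex (xx 1 0 t - xbar t 0) (xx 1 1 t - xbar t 1)"
    have tri: "norm (?z0 - ?z1) \<le> norm ?z0 + norm ?z1" by (rule norm_triangle_ineq4)
    have eqz: "?z0 - ?z1 = Complex (rr t * UU t 0) (rr t * UU t 1)"
      by (simp add: xx_def complex_eq_iff)
    have nz: "norm (Complex (rr t * UU t 0) (rr t * UU t 1)) = rr t"
    proof -
      have "(rr t * UU t 0)^2 + (rr t * UU t 1)^2 = (rr t)^2 * (UU t 0 ^2 + UU t 1 ^2)"
        by (simp add: algebra_simps power2_eq_square)
      also have "\<dots> = (rr t)^2" unfolding UU_norm by simp
      finally have e: "(rr t * UU t 0)^2 + (rr t * UU t 1)^2 = (rr t)^2" .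
      show ?thesis unfolding complex_norm e using rpos by simp
    qed
    have ft: "f t = norm ?z0 + norm ?z1" unfolding f_def vnorm2 by simp
    have "rr t \<le> f t" using tri unfolding eqz nz ft .
    then show False using A r by linarith
  qed
  then show False by simp
qed

lemma ic: "interconnection 2 Gam"
  unfolding interconnection_def
proof (intro conjI allI impI)
  fix i j :: nat assume "i < 2" "j < 2" "i \<noteq> j"
  then show "0 \<le> Gam i j" by (auto simp: Gam_def)
next
  fix i :: nat assume i: "i < 2"
  show "Gam i i = - (\<Sum>j\<in>{..<2} - {i}. Gam i j)"
  proof (cases "i = 0")
    case True
    have "{..<(2::nat)} - {0} = {1}" by auto
    then show ?thesis using True by (simp add: Gam_def)
  next
    case False
    then have "i = 1" using i by auto
    moreover have "{..<(2::nat)} - {1} = {0}" by auto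
    ultimately show ?thesis by (simp add: Gam_def)
  qed
qed

lemma conn: "connected_ic 2 Gam"
  unfolding connected_ic_def
proof (intro exI[of _ 1] conjI allI impI)
  fix j :: nat assume "j < 2" "j \<noteq> 1"
  then have j: "j = 0" by auto
  have "edge 2 Gam 0 1" by (simp add: edge_def Gam_def)
  then show "(edge 2 Gam)\<^sup>+\<^sup>+ j 1" unfolding j by (rule tranclp.r_into_trancl)
qed simp

theorem theorem7:
  shows "\<exists>(p::nat) (n::nat) (\<Gamma>::nat \<Rightarrow> nat \<Rightarrow> real) (Q::real \<Rightarrow> nat \<Rightarrow> nat \<Rightarrow> real).
           interconnection p \<Gamma> \<and> connected_ic p \<Gamma> \<and>
           (\<forall>t. Q t \<in> Qbar n) \<and>
           (\<forall>T\<ge>0. \<forall>k<n. \<forall>l<n. (\<lambda>t. Q t k l) integrable_on {0..T}) \<and>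
           Liminf at_top (\<lambda>T. ereal (sigma_min n (int_Q Q T) / T)) > 0 \<and>
           (\<exists>x. is_solution p n \<Gamma> Q x \<and> \<not> synchronize p n x)"
proof (intro exI conjI)
  show "interconnection 2 Gam" by (rule ic)
  show "connected_ic 2 Gam" by (rule conn)
  show "\<forall>t. QQ t \<in> Qbar 2" using Qbar_QQ by blast
  show "\<forall>T\<ge>0. \<forall>k<2. \<forall>l<2. (\<lambda>t. QQ t k l) integrable_on {0..T}" using integrable_QQ by blast
  show "is_solution 2 2 Gam QQ xx" by (rule sol)
  show "\<not> synchronize 2 2 xx" by (rule not_sync)
  have "eventually (\<lambda>T. ereal (1/160) \<le> ereal (sigma_min 2 (int_Q QQ T) / T)) at_top"
    using eventually_ge_at_top[of "36::real"] by eventually_elim (use sigma_bound in simp)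
  then have "ereal (1/160) \<le> Liminf at_top (\<lambda>T. ereal (sigma_min 2 (int_Q QQ T) / T))"
    by (rule Liminf_bounded)
  then show "Liminf at_top (\<lambda>T. ereal (sigma_min 2 (int_Q QQ T) / T)) > 0"
    by (rule less_le_trans[rotated]) simp
qed

end
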